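(* Let $n\ge 1$. Every $X$-circuit $M$ on $n$ qubits satisfies $M\bullet(Z\otimes I\otimes\cdots\otimes I)=I\otimes\cdots\otimes I\otimes Z$.
   Context: Matrices: $X=\begin{bmatrix}0&1\\1&0\end{bmatrix}$, $Z=\begin{bmatrix}1&0\\0&-1\end{bmatrix}$, $H=\frac{1}{\sqrt2}\begin{bmatrix}1&1\\1&-1\end{bmatrix}$, $CZ=\mathrm{diag}(1,1,1,-1)$. Operators on $n$ qubits act on $(\mathbb{R}^2)^{\otimes n}$, qubit $1$ being the first tensor factor; a one-qubit gate on qubit $i$, or a two-qubit gate on qubits $i,i+1$ (with qubit $i$ the first tensor factor of the gate, called its upper qubit), denotes that matrix tensored with identities on the other qubits. For matrices $C,P$, $C\bullet P=CPC^{-1}$. A circuit is a finite sequence of gates $g_1,\dots,g_k$ ($g_1$ applied first); its operator is $g_k\cdots g_1$, and $M\bullet P$ means (operator of $M$)$\bullet P$. Derived generators (formal symbols with defining gate sequences; in a two-qubit symbol subscript $1$ is the upper, $2$ the lower qubit; ";" separates steps): $E_1$ = empty, $E_2$ = $Z$; $D_1$ = $CZ;\,H_1,H_2;\,CZ;\,H_1,H_2;\,CZ;\,H_2$; $D_2$ = $H_1;\,CZ;\,H_1,H_2;\,CZ;\,H_2$; $D_3$ = $H_1,H_2;\,CZ;\,H_1,H_2;\,CZ;\,H_2$; $D_4$ = $H_1;\,CZ;\,H_1,H_2;\,CZ;\,H_2;\,CZ$. An $X$-circuit on $n$ qubits is a sequence of symbols of the form $D_{d_1}$ on qubits $1,2$,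 then $D_{d_2}$ on qubits $2,3$, ..., then $D_{d_{n-1}}$ on qubits $n-1,n$, then $E_e$ on qubit $n$ (for $n=1$ it is just $E_e$), with $d_i\in\{1,2,3,4\}$, $e\in\{1,2\}$. *)

theory Defs
  imports Complex_Main "Jordan_Normal_Form.Gauss_Jordan_Elimination"
begin

definition Xg :: "real mat" where "Xg = mat_of_rows_list 2 [[0,1],[1,0]]"
definition Zg :: "real mat" where "Zg = mat_of_rows_list 2 [[1,0],[0,-1]]"
definition Hg :: "real mat" where
  "Hg = mat_of_rows_list 2 [[1/sqrt 2, 1/sqrt 2],[1/sqrt 2, -1/sqrt 2]]"
definition CZg :: "real mat" where
  "CZg = mat_of_rows_list 4 [[1,0,0,0],[0,1,0,0],[0,0,1,0],[0,0,0,-1]]"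

text \<open>Kronecker (tensor) product; the first argument is the first (most significant) factor.\<close>
definition kron :: "real mat \<Rightarrow> real mat \<Rightarrow> real mat" where
  "kron A B = mat (dim_row A * dim_row B) (dim_col A * dim_col B)
     (\<lambda>(i,j). A $$ (i div dim_row B, j div dim_col B) * B $$ (i mod dim_row B, j mod dim_col B))"

definition conjm :: "real mat \<Rightarrow> real mat \<Rightarrow> real mat" where
  "conjm C P = C * P * the (mat_inverse C)"

section \<open>Gates placed on n qubits (qubits numbered 1..n)\<close>

definition one_q :: "nat \<Rightarrow> nat \<Rightarrow> real mat \<Rightarrow> real mat" where
  "one_q n i G = kron (1\<^sub>m (2^(i-1))) (kron G (1\<^sub>m (2^(n-i))))"

definition two_q :: "nat \<Rightarrow> nat \<Rightarrow> real mat \<Rightarrow> real mat" where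
  "two_q n i G = kron (1\<^sub>m (2^(i-1))) (kron G (1\<^sub>m (2^(n-i-1))))"

definition circ_op :: "nat \<Rightarrow> real mat list \<Rightarrow> real mat" where
  "circ_op n gs = foldl (\<lambda>acc g. g * acc) (1\<^sub>m (2^n)) gs"

definition D_seq :: "nat \<Rightarrow> nat \<Rightarrow> nat \<Rightarrow> real mat list" where
  "D_seq n i d =
    (let CZ = two_q n i CZg; H1 = one_q n i Hg; H2 = one_q n (i+1) Hg in
     if d = 1 then [CZ, H1, H2, CZ, H1, H2, CZ, H2]
     else if d = 2 then [H1, CZ, H1, H2, CZ, H2]
     else if d = 3 then [H1, H2, CZ, H1, H2, CZ, H2]
     else [H1, CZ, H1, H2, CZ, H2, CZ])"

definition E_seq :: "nat \<Rightarrow> nat \<Rightarrow> real mat list" where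
  "E_seq n e = (if e = 1 then [] else [one_q n n Zg])"

definition xcirc_gates :: "nat \<Rightarrow> nat list \<Rightarrow> nat \<Rightarrow> real mat list" where
  "xcirc_gates n ds e = concat (map (\<lambda>k. D_seq n (k+1) (ds ! k)) [0..<n-1]) @ E_seq n e"

definition is_xcirc_param :: "nat \<Rightarrow> nat list \<Rightarrow> nat \<Rightarrow> bool" where
  "is_xcirc_param n ds e \<longleftrightarrow> length ds = n - 1 \<and> set ds \<subseteq> {1,2,3,4} \<and> e \<in> {1,2}"

end

theory Submission
  imports Defs
begin

lemma kron_dims[simp]: "dim_row (kron A B) = dim_row A * dim_row B" "dim_col (kron A B) = dim_col A * dim_col B"
  by (auto simp: kron_def)


lemma kron_index[simp]: "i < dim_row A * dim_row B \<Longrightarrow> j < dim_col A * dim_col B \<Longrightarrow>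
  kron A B $$ (i,j) = A $$ (i div dim_row B, j div dim_col B) * B $$ (i mod dim_row B, j mod dim_col B)"
  by (auto simp: kron_def)

lemma sum_split_nat: "(\<Sum>k<a*b. f k) = (\<Sum>m<a. \<Sum>l<b. f (m*b+l::nat) :: real)"
proof -
  have "(\<Sum>k<a*b. f k) = (\<Sum>m<a. sum f {m*b..<m*b+b})"
    using sum.nat_group[of "\<lambda>m. f m" b a] by simp
  also have "\<dots> = (\<Sum>m<a. \<Sum>l<b. f (m*b+l))"
  proof (rule sum.cong[OF refl])
    fix m
    have "sum f {m*b..<m*b+b} = sum f {0+m*b..<b+m*b}" by (simp add: add.commute)
    also have "\<dots> = (\<Sum>l=0..<b. f (l+m*b))" by (rule sum.shift_bounds_nat_ivl)
    finally show "sum f {m*b..<m*b+b} = (\<Sum>l<b. f (m*b+l))" by (simp add: lessThan_atLeast0 add.commute)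
  qed
  finally show ?thesis .
qed

lemma kron_mult:
  assumes "dim_col A = dim_row C" "dim_col B = dim_row D" "dim_row B > 0" "dim_col D > 0" "dim_col B > 0"
  shows "kron A B * kron C D = kron (A*C) (B*D)"
proof (rule eq_matI)
  fix i j assume i: "i < dim_row (kron (A*C) (B*D))" and j: "j < dim_col (kron (A*C) (B*D))"
  let ?rb = "dim_row B" and ?cb = "dim_col B" and ?cd = "dim_col D"
  have i1: "i div ?rb < dim_row A" "i mod ?rb < ?rb" using i assms
    by (auto simp: less_mult_imp_div_less)
  have j1: "j div ?cd < dim_col C" "j mod ?cd < ?cd" using j assms
    by (auto simp: less_mult_imp_div_less)
  have "(kron A B * kron C D) $$ (i,j) = (\<Sum>k<dim_col A * ?cb. kron A B $$ (i,k) * kron C D $$ (k,j))"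
    using i j assms by (auto simp: scalar_prod_def lessThan_atLeast0 assms(1,2)[symmetric] intro!: sum.cong)
  also have "\<dots> = (\<Sum>m<dim_col A. \<Sum>l<?cb. kron A B $$ (i,m*?cb+l) * kron C D $$ (m*?cb+l,j))"
    by (rule sum_split_nat)
  also have "\<dots> = (\<Sum>m<dim_col A. \<Sum>l<?cb. (A $$ (i div ?rb, m) * C $$ (m, j div ?cd)) * (B $$ (i mod ?rb, l) * D $$ (l, j mod ?cd)))"
  proof (intro sum.cong refl)
    fix m l assume m: "m \<in> {..<dim_col A}" and l: "l \<in> {..<?cb}"
    have k1: "m*?cb+l < (m+1)*?cb" using l by simp
    have k2: "(m+1)*?cb \<le> dim_col A * ?cb" using m by (intro mult_le_mono1) simp
    have k: "m*?cb+l < dim_col A * ?cb" using k1 k2 by linarith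
    have "(m*?cb+l) div ?cb = m" "(m*?cb+l) mod ?cb = l" using l assms by auto
    then show "kron A B $$ (i,m*?cb+l) * kron C D $$ (m*?cb+l,j) = (A $$ (i div ?rb, m) * C $$ (m, j div ?cd)) * (B $$ (i mod ?rb, l) * D $$ (l, j mod ?cd))"
      using i j k assms by simp
  qed
  also have "\<dots> = (\<Sum>m<dim_col A. A $$ (i div ?rb, m) * C $$ (m, j div ?cd)) * (\<Sum>l<?cb. B $$ (i mod ?rb, l) * D $$ (l, j mod ?cd))"
    by (simp add: sum_product)
  also have "\<dots> = kron (A*C) (B*D) $$ (i,j)"
    using i j i1 j1 assms by (simp add: scalar_prod_def lessThan_atLeast0)
  finally show "(kron A B * kron C D) $$ (i,j) = kron (A*C) (B*D) $$ (i,j)" .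
qed (use assms in auto)

lemma kron_assoc:
  assumes "dim_row B > 0" "dim_col B > 0" "dim_row C > 0" "dim_col C > 0"
  shows "kron (kron A B) C = kron A (kron B C)"
proof (rule eq_matI)
  fix i j assume i: "i < dim_row (kron A (kron B C))" and j: "j < dim_col (kron A (kron B C))"
  let ?rb = "dim_row B" and ?cb = "dim_col B" and ?rc = "dim_row C" and ?cc = "dim_col C"
  have r1: "i div ?rc div ?rb = i div (?rb * ?rc)" by (metis div_mult2_eq mult.commute)
  have r2': "i mod (?rb * ?rc) = ?rc * (i div ?rc mod ?rb) + i mod ?rc" by (metis mod_mult2_eq mult.commute)
  have r2: "i div ?rc mod ?rb = i mod (?rb * ?rc) div ?rc"
    unfolding r2' using assms(3) by simp
  have r3: "i mod (?rb * ?rc) mod ?rc = i mod ?rc" by (simp add: mod_mod_cancel)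
  have c1: "j div ?cc div ?cb = j div (?cb * ?cc)" by (metis div_mult2_eq mult.commute)
  have c2': "j mod (?cb * ?cc) = ?cc * (j div ?cc mod ?cb) + j mod ?cc" by (metis mod_mult2_eq mult.commute)
  have c2: "j div ?cc mod ?cb = j mod (?cb * ?cc) div ?cc"
    unfolding c2' using assms(4) by simp
  have c3: "j mod (?cb * ?cc) mod ?cc = j mod ?cc" by (simp add: mod_mod_cancel)
  have i2: "i div ?rc < dim_row A * ?rb" using i by (simp add: less_mult_imp_div_less mult.assoc)
  have j2: "j div ?cc < dim_col A * ?cb" using j by (simp add: less_mult_imp_div_less mult.assoc)
  have i3: "i mod (?rb * ?rc) < ?rb * ?rc" "j mod (?cb * ?cc) < ?cb * ?cc" using assms by auto
  show "kron (kron A B) C $$ (i,j) = kron A (kron B C) $$ (i,j)"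
    using i j i2 j2 i3 assms by (simp add: r1 r2 r3 c1 c2 c3 mult.assoc)
qed (auto simp: mult.assoc)

lemma kron_one_one: "kron (1\<^sub>m a) (1\<^sub>m b) = 1\<^sub>m (a*b)"
proof (rule eq_matI)
  fix i j assume i: "i < dim_row (1\<^sub>m (a*b))" and j: "j < dim_col (1\<^sub>m (a*b))"
  then have b: "b > 0" by (auto intro: ccontr)
  have "(i div b = j div b \<and> i mod b = j mod b) = (i = j)"
    by (metis div_mult_mod_eq)
  moreover have "i div b < a" "j div b < a" using i j by (auto simp: less_mult_imp_div_less)
  ultimately show "kron (1\<^sub>m a) (1\<^sub>m b) $$ (i,j) = 1\<^sub>m (a*b) $$ (i,j)"
    using i j b by auto
qed auto

lemma kron_one_left: "kron (1\<^sub>m 1) A = A"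
  by (rule eq_matI) auto

lemma kron_one_right: "kron A (1\<^sub>m 1) = A"
  by (rule eq_matI) auto


definition c :: real where "c = 1 / sqrt 2"
lemma cc: "c * c = 1/2" by (simp add: c_def)

lemma less4: "(i::nat) < 4 \<longleftrightarrow> i = 0 \<or> i = 1 \<or> i = 2 \<or> i = 3" by auto

lemma mult4: assumes "A \<in> carrier_mat 4 4" "B \<in> carrier_mat 4 4" "i < 4" "j < 4"
  shows "(A * B) $$ (i,j) = A$$(i,0)*B$$(0,j) + A$$(i,1)*B$$(1,j) + A$$(i,2)*B$$(2,j) + A$$(i,3)*B$$(3,j)"
  using assms by (simp add: scalar_prod_def numeral_eq_Suc atLeast0_lessThan_Suc algebra_simps)

lemma eq4: assumes "A \<in> carrier_mat 4 4" "B \<in> carrier_mat 4 4"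
  "\<forall>i\<in>{0,1,2,3}. \<forall>j\<in>{0,1,2,3}. A $$ (i,j) = B $$ (i,j)" shows "A = B"
  using assms by (intro eq_matI) (auto simp: less4)

definition L4 :: "real list list \<Rightarrow> real mat" where "L4 xs = mat_of_rows_list 4 xs"

lemma L4_carrier: "length xs = 4 \<Longrightarrow> L4 xs \<in> carrier_mat 4 4"
  by (simp add: L4_def mat_of_rows_list_def)

lemma L4_index: "i < 4 \<Longrightarrow> j < 4 \<Longrightarrow> length xs = 4 \<Longrightarrow> L4 xs $$ (i,j) = xs ! i ! j"
  by (simp add: L4_def mat_of_rows_list_def)

lemma L4_mult: assumes "length xs = 4" "length ys = 4" "i < 4" "j < 4"
  shows "(L4 xs * L4 ys) $$ (i,j) = xs!i!0 * ys!0!j + xs!i!1 * ys!1!j + xs!i!2 * ys!2!j + xs!i!3 * ys!3!j"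
  using assms by (simp add: mult4 L4_carrier L4_index)

lemma L4_mult_carrier: "length xs = 4 \<Longrightarrow> length ys = 4 \<Longrightarrow> L4 xs * L4 ys \<in> carrier_mat 4 4"
  by (rule mult_carrier_mat[OF L4_carrier L4_carrier])

lemma eq4L: "length xs = 4 \<Longrightarrow> length ys = 4 \<Longrightarrow> length zs = 4 \<Longrightarrow> length ws = 4 \<Longrightarrow>
  \<forall>i\<in>{0,1,2,3}. \<forall>j\<in>{0,1,2,3}. (L4 xs * L4 ys) $$ (i,j) = (L4 zs * L4 ws) $$ (i,j) \<Longrightarrow> L4 xs * L4 ys = L4 zs * L4 ws"
  by (rule eq4) (simp_all add: L4_mult_carrier)

lemma eq4L1: "length xs = 4 \<Longrightarrow> length ys = 4 \<Longrightarrow> length zs = 4 \<Longrightarrow>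
  \<forall>i\<in>{0,1,2,3}. \<forall>j\<in>{0,1,2,3}. (L4 xs * L4 ys) $$ (i,j) = L4 zs $$ (i,j) \<Longrightarrow> L4 xs * L4 ys = L4 zs"
  by (rule eq4) (simp_all add: L4_mult_carrier L4_carrier)

definition "H1L = L4 [[c,0,c,0],[0,c,0,c],[c,0,-c,0],[0,c,0,-c]]"
definition "H2L = L4 [[c,c,0,0],[c,-c,0,0],[0,0,c,c],[0,0,c,-c]]"
definition "CZL = L4 [[1,0,0,0],[0,1,0,0],[0,0,1,0],[0,0,0,-1]]"
definition "Z1L = L4 [[1,0,0,0],[0,1,0,0],[0,0,-1,0],[0,0,0,-1]]"
definition "Z2L = L4 [[1,0,0,0],[0,-1,0,0],[0,0,1,0],[0,0,0,-1]]"
definition "X1L = L4 [[0,0,1,0],[0,0,0,1],[1,0,0,0],[0,1,0,0]]"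
definition "X2L = L4 [[0,1,0,0],[1,0,0,0],[0,0,0,1],[0,0,1,0]]"
definition "XZL = L4 [[0,0,1,0],[0,0,0,-1],[1,0,0,0],[0,-1,0,0]]"
definition "ZZL = L4 [[1,0,0,0],[0,-1,0,0],[0,0,-1,0],[0,0,0,1]]"
definition "ZXL = L4 [[0,1,0,0],[1,0,0,0],[0,0,0,-1],[0,0,-1,0]]"
definition "IL = L4 [[1,0,0,0],[0,1,0,0],[0,0,1,0],[0,0,0,1]]"

lemmas Ldefs = H1L_def H2L_def CZL_def Z1L_def Z2L_def X1L_def X2L_def XZL_def ZZL_def ZXL_def IL_def

lemma Lcarr: "H1L \<in> carrier_mat 4 4" "H2L \<in> carrier_mat 4 4" "CZL \<in> carrier_mat 4 4"
  "Z1L \<in> carrier_mat 4 4" "Z2L \<in> carrier_mat 4 4" "X1L \<in> carrier_mat 4 4" "X2L \<in> carrier_mat 4 4"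
  "XZL \<in> carrier_mat 4 4" "ZZL \<in> carrier_mat 4 4" "ZXL \<in> carrier_mat 4 4" "IL \<in> carrier_mat 4 4"
  by (simp_all add: Ldefs L4_carrier)

lemma test: "H1L * Z1L = X1L * H1L"
  unfolding Ldefs by (rule eq4L) (simp_all add: L4_mult)

lemma test2: "H1L * H1L = IL"
  unfolding Ldefs by (rule eq4L1) (simp_all add: L4_mult L4_index cc)

lemma H1L_kron: "kron Hg (1\<^sub>m 2) = H1L"
  unfolding Ldefs by (rule eq4) (auto simp: L4_carrier L4_index Hg_def mat_of_rows_list_def c_def)


definition emb :: "nat \<Rightarrow> nat \<Rightarrow> real mat \<Rightarrow> real mat" where
  "emb a b G = kron (1\<^sub>m a) (kron G (1\<^sub>m b))"

lemma emb_carrier: "G \<in> carrier_mat k k \<Longrightarrow> emb a b G \<in> carrier_mat (a*(k*b)) (a*(k*b))"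
  by (intro carrier_matI) (simp_all add: emb_def carrier_matD)

lemma emb_mult: assumes "G \<in> carrier_mat k k" "G' \<in> carrier_mat k k" "k > 0" "b > 0"
  shows "emb a b G * emb a b G' = emb a b (G*G')"
proof -
  have "kron G (1\<^sub>m b) * kron G' (1\<^sub>m b) = kron (G*G') (1\<^sub>m b * 1\<^sub>m b)"
    using assms by (intro kron_mult) auto
  then have 1: "kron G (1\<^sub>m b) * kron G' (1\<^sub>m b) = kron (G*G') (1\<^sub>m b)" by simp
  have "emb a b G * emb a b G' = kron (1\<^sub>m a * 1\<^sub>m a) (kron G (1\<^sub>m b) * kron G' (1\<^sub>m b))"
    unfolding emb_def using assms by (intro kron_mult) auto
  then show ?thesis using 1 by (simp add: emb_def)
qed

lemma emb_one: "emb a b (1\<^sub>m k) = 1\<^sub>m (a*(k*b))"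
  by (simp add: emb_def kron_one_one)

lemma n_split: "1 \<le> i \<Longrightarrow> i + 1 \<le> n \<Longrightarrow> (2::nat)^(i-1) * (4 * 2^(n-i-1)) = 2^n"
proof -
  assume "1 \<le> i" "i + 1 \<le> n"
  then have "n = (i - 1) + 2 + (n-i-1)" by simp
  then have "(2::nat)^n = 2^(i-1) * 2^2 * 2^(n-i-1)" by (metis power_add)
  then show ?thesis by simp
qed

lemma n_split1: "1 \<le> i \<Longrightarrow> i \<le> n \<Longrightarrow> (2::nat)^(i-1) * (2 * 2^(n-i)) = 2^n"
proof -
  assume "1 \<le> i" "i \<le> n"
  then have "n = (i - 1) + 1 + (n-i)" by simp
  then have "(2::nat)^n = 2^(i-1) * 2^1 * 2^(n-i)" by (metis power_add)
  then show ?thesis by simp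
qed

lemma two_q_emb: "two_q n i G = emb (2^(i-1)) (2^(n-i-1)) G" by (simp add: two_q_def emb_def)
lemma one_q_emb: "one_q n i G = emb (2^(i-1)) (2^(n-i)) G" by (simp add: one_q_def emb_def)

lemma two_q_carrier: "1 \<le> i \<Longrightarrow> i + 1 \<le> n \<Longrightarrow> G \<in> carrier_mat 4 4 \<Longrightarrow> two_q n i G \<in> carrier_mat (2^n) (2^n)"
  using emb_carrier[of G 4 "2^(i-1)" "2^(n-i-1)"] n_split[of i n] unfolding two_q_emb by metis

lemma two_q_mult: "G \<in> carrier_mat 4 4 \<Longrightarrow> G' \<in> carrier_mat 4 4 \<Longrightarrow> two_q n i G * two_q n i G' = two_q n i (G*G')"
  by (simp add: two_q_emb emb_mult)

lemma two_q_one: "1 \<le> i \<Longrightarrow> i + 1 \<le> n \<Longrightarrow> two_q n i (1\<^sub>m 4) = 1\<^sub>m (2^n)"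
  using n_split[of i n] unfolding two_q_emb emb_one by metis

lemma one_q_carrier: "1 \<le> i \<Longrightarrow> i \<le> n \<Longrightarrow> G \<in> carrier_mat 2 2 \<Longrightarrow> one_q n i G \<in> carrier_mat (2^n) (2^n)"
  using emb_carrier[of G 2 "2^(i-1)" "2^(n-i)"] n_split1[of i n] unfolding one_q_emb by metis

lemma one_q_mult: "G \<in> carrier_mat 2 2 \<Longrightarrow> G' \<in> carrier_mat 2 2 \<Longrightarrow> one_q n i G * one_q n i G' = one_q n i (G*G')"
  by (simp add: one_q_emb emb_mult)

lemma one_q_one: "1 \<le> i \<Longrightarrow> i \<le> n \<Longrightarrow> one_q n i (1\<^sub>m 2) = 1\<^sub>m (2^n)"
  using n_split1[of i n] unfolding one_q_emb emb_one by metis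

lemma one_q_upper: assumes "1 \<le> i" "i + 1 \<le> n" "G \<in> carrier_mat 2 2"
  shows "one_q n i G = two_q n i (kron G (1\<^sub>m 2))"
proof -
  have e: "(2::nat)^(n-i) = 2 * 2^(n-i-1)" using assms
    by (metis Suc_diff_Suc Suc_le_lessD diff_diff_left power_Suc add.commute plus_1_eq_Suc)
  have "kron G (1\<^sub>m (2^(n-i))) = kron G (kron (1\<^sub>m 2) (1\<^sub>m (2^(n-i-1))))"
    by (simp add: e kron_one_one)
  also have "\<dots> = kron (kron G (1\<^sub>m 2)) (1\<^sub>m (2^(n-i-1)))"
    by (rule kron_assoc[symmetric]) auto
  finally show ?thesis by (simp add: one_q_def two_q_def)
qed

lemma one_q_lower: assumes "1 \<le> i" "i + 1 \<le> n" "G \<in> carrier_mat 2 2"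
  shows "one_q n (i+1) G = two_q n i (kron (1\<^sub>m 2) G)"
proof -
  have e: "(2::nat)^i = 2^(i-1) * 2" using assms
    by (metis Suc_diff_le diff_Suc_1 power_Suc mult.commute le_refl Suc_le_eq One_nat_def Suc_pred less_eq_Suc_le)
  have "kron (1\<^sub>m (2^i)) (kron G (1\<^sub>m (2^(n-i-1)))) = kron (kron (1\<^sub>m (2^(i-1))) (1\<^sub>m 2)) (kron G (1\<^sub>m (2^(n-i-1))))"
    by (simp add: e kron_one_one)
  also have "\<dots> = kron (1\<^sub>m (2^(i-1))) (kron (1\<^sub>m 2) (kron G (1\<^sub>m (2^(n-i-1)))))"
    using assms by (intro kron_assoc) auto
  also have "kron (1\<^sub>m 2) (kron G (1\<^sub>m (2^(n-i-1)))) = kron (kron (1\<^sub>m 2) G) (1\<^sub>m (2^(n-i-1)))"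
    using assms by (intro kron_assoc[symmetric]) auto
  finally show ?thesis by (simp add: one_q_def two_q_def)
qed


lemma Hg_carrier: "Hg \<in> carrier_mat 2 2" unfolding Hg_def mat_of_rows_list_def by (simp add: numeral_2_eq_2)
lemma Zg_carrier: "Zg \<in> carrier_mat 2 2" unfolding Zg_def mat_of_rows_list_def by (simp add: numeral_2_eq_2)

lemma Hg_dims[simp]: "dim_row Hg = 2" "dim_col Hg = 2" using Hg_carrier by auto
lemma Zg_dims[simp]: "dim_row Zg = 2" "dim_col Zg = 2" using Zg_carrier by auto
lemma Hg_idx: "i < 2 \<Longrightarrow> j < 2 \<Longrightarrow> Hg $$ (i,j) = [[c,c],[c,-c]] ! i ! j"
  by (simp add: Hg_def mat_of_rows_list_def c_def)
lemma Zg_idx: "i < 2 \<Longrightarrow> j < 2 \<Longrightarrow> Zg $$ (i,j) = [[1,0],[0,-1::real]] ! i ! j"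
  by (simp add: Zg_def mat_of_rows_list_def)

lemma H2L_kron: "kron (1\<^sub>m 2) Hg = H2L"
  unfolding Ldefs by (rule eq4) (auto simp: L4_carrier L4_index Hg_idx)
lemma Z1L_kron: "kron Zg (1\<^sub>m 2) = Z1L"
  unfolding Ldefs by (rule eq4) (auto simp: L4_carrier L4_index Zg_idx)
lemma Z2L_kron: "kron (1\<^sub>m 2) Zg = Z2L"
  unfolding Ldefs by (rule eq4) (auto simp: L4_carrier L4_index Zg_idx)
lemma CZ_L: "CZg = CZL" by (simp add: CZg_def CZL_def L4_def)
lemma IL_one: "IL = 1\<^sub>m 4"
  unfolding Ldefs by (rule eq4) (auto simp: L4_carrier L4_index)
lemma ZgZg: "Zg * Zg = 1\<^sub>m 2"
proof (rule eq_matI)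
  fix i j assume "i < dim_row (1\<^sub>m 2 :: real mat)" "j < dim_col (1\<^sub>m 2 :: real mat)"
  then have "i \<in> {0,1}" "j \<in> {0,1}" by auto
  then show "(Zg * Zg) $$ (i,j) = 1\<^sub>m 2 $$ (i,j)"
    by (auto simp: scalar_prod_def Zg_idx numeral_2_eq_2)
qed auto

lemma sq: "H1L * H1L = 1\<^sub>m 4" "H2L * H2L = 1\<^sub>m 4" "CZL * CZL = 1\<^sub>m 4"
  unfolding IL_one[symmetric] Ldefs by (rule eq4L1; simp add: L4_mult L4_index cc)+

lemma rels: "CZL * Z1L = Z1L * CZL" "H1L * Z1L = X1L * H1L" "H2L * X1L = X1L * H2L"
  "CZL * X1L = XZL * CZL" "H1L * XZL = ZZL * H1L" "H2L * ZZL = ZXL * H2L"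
  "CZL * ZXL = X2L * CZL" "H2L * X2L = Z2L * H2L" "CZL * Z2L = Z2L * CZL"
  unfolding Ldefs by (rule eq4L; simp add: L4_mult)+

inductive chain :: "nat \<Rightarrow> real mat \<Rightarrow> real mat list \<Rightarrow> real mat \<Rightarrow> bool" where
  nil: "P \<in> carrier_mat N N \<Longrightarrow> chain N P [] P"
| cons: "P \<in> carrier_mat N N \<Longrightarrow> g \<in> carrier_mat N N \<Longrightarrow> P' \<in> carrier_mat N N \<Longrightarrow> g * P = P' * g
    \<Longrightarrow> chain N P' gs Q \<Longrightarrow> chain N P (g # gs) Q"

lemma chain_append: "chain N P gs Q \<Longrightarrow> chain N Q hs R \<Longrightarrow> chain N P (gs @ hs) R"
  by (induction rule: chain.induct) (auto intro: chain.cons)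

lemma chain_carrier: "chain N P gs Q \<Longrightarrow> P \<in> carrier_mat N N \<and> Q \<in> carrier_mat N N"
  by (induction rule: chain.induct) auto

lemma chain_fold: "chain N P gs Q \<Longrightarrow> A \<in> carrier_mat N N \<Longrightarrow> P0 \<in> carrier_mat N N \<Longrightarrow> A * P0 = P * A
  \<Longrightarrow> foldl (\<lambda>acc g. g * acc) A gs * P0 = Q * foldl (\<lambda>acc g. g * acc) A gs
     \<and> foldl (\<lambda>acc g. g * acc) A gs \<in> carrier_mat N N"
proof (induction arbitrary: A rule: chain.induct)
  case (nil P N)
  then show ?case by simp
next
  case (cons P N g P' gs Q)
  have "g * A * P0 = g * (A * P0)" using cons by (metis assoc_mult_mat)
  also have "\<dots> = g * (P * A)" using cons by simp
  also have "\<dots> = g * P * A" using sym[OF assoc_mult_mat[OF cons.hyps(2) cons.hyps(1) cons.prems(1)]] .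
  also have "\<dots> = P' * g * A" using cons by simp
  also have "\<dots> = P' * (g * A)" using assoc_mult_mat[OF cons.hyps(3) cons.hyps(2) cons.prems(1)] .
  finally have "g * A * P0 = P' * (g * A)" .
  then show ?case using cons.IH[of "g*A"] cons.prems cons.hyps by simp
qed

fun okc :: "real mat list \<Rightarrow> real mat list \<Rightarrow> bool" where
  "okc [P] [] = (P \<in> carrier_mat 4 4)"
| "okc (P # P' # Ps) (g # gs) = (P \<in> carrier_mat 4 4 \<and> g \<in> carrier_mat 4 4 \<and> g * P = P' * g \<and> okc (P' # Ps) gs)"
| "okc _ _ = False"

lemma okc_chain: "okc Ps gs \<Longrightarrow> chain 4 (hd Ps) gs (last Ps)"
proof (induction Ps gs rule: okc.induct)
  case (1 P) then show ?case by (auto intro: chain.nil)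
next
  case (2 P P' Ps g gs)
  then have "P' \<in> carrier_mat 4 4" by (cases Ps; cases gs) auto
  then show ?case using 2 by (auto intro!: chain.cons)
qed auto

lemma chain_lift0: "chain N P gs Q \<Longrightarrow> N = 4 \<Longrightarrow> 1 \<le> i \<Longrightarrow> i + 1 \<le> n \<Longrightarrow>
  chain (2^n) (two_q n i P) (map (two_q n i) gs) (two_q n i Q)"
proof (induction rule: chain.induct)
  case (nil P N) then show ?case by (auto intro!: chain.nil two_q_carrier)
next
  case (cons P N g P' gs Q)
  then show ?case by (auto intro!: chain.cons[where P'="two_q n i P'"] two_q_carrier simp: two_q_mult)
qed

lemmas chain_lift = chain_lift0[OF _ refl]

definition D4 :: "nat \<Rightarrow> real mat list" where
  "D4 d = (if d = 1 then [CZL, H1L, H2L, CZL, H1L, H2L, CZL, H2L]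
     else if d = 2 then [H1L, CZL, H1L, H2L, CZL, H2L]
     else if d = 3 then [H1L, H2L, CZL, H1L, H2L, CZL, H2L]
     else [H1L, CZL, H1L, H2L, CZL, H2L, CZL])"

definition P4 :: "nat \<Rightarrow> real mat list" where
  "P4 d = (if d = 1 then [Z1L, Z1L, X1L, X1L, XZL, ZZL, ZXL, X2L, Z2L]
     else if d = 2 then [Z1L, X1L, XZL, ZZL, ZXL, X2L, Z2L]
     else if d = 3 then [Z1L, X1L, X1L, XZL, ZZL, ZXL, X2L, Z2L]
     else [Z1L, X1L, XZL, ZZL, ZXL, X2L, Z2L, Z2L])"

lemma okc_D: "okc (P4 d) (D4 d)"
  by (simp add: P4_def D4_def Lcarr rels)

lemma P4_hd_last: "hd (P4 d) = Z1L" "last (P4 d) = Z2L" by (simp_all add: P4_def)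

lemma H_up: "1 \<le> i \<Longrightarrow> i + 1 \<le> n \<Longrightarrow> one_q n i Hg = two_q n i H1L"
  using one_q_upper[OF _ _ Hg_carrier] H1L_kron by simp
lemma H_low: "1 \<le> i \<Longrightarrow> i + 1 \<le> n \<Longrightarrow> one_q n (Suc i) Hg = two_q n i H2L"
  using one_q_lower[OF _ _ Hg_carrier] H2L_kron by simp
lemma Z_up: "1 \<le> i \<Longrightarrow> i + 1 \<le> n \<Longrightarrow> one_q n i Zg = two_q n i Z1L"
  using one_q_upper[OF _ _ Zg_carrier] Z1L_kron by simp
lemma Z_low: "1 \<le> i \<Longrightarrow> i + 1 \<le> n \<Longrightarrow> one_q n (Suc i) Zg = two_q n i Z2L"
  using one_q_lower[OF _ _ Zg_carrier] Z2L_kron by simp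

lemma D_seq_map: "1 \<le> i \<Longrightarrow> i + 1 \<le> n \<Longrightarrow> D_seq n i d = map (two_q n i) (D4 d)"
  by (simp add: D_seq_def D4_def Let_def H_up H_low CZ_L)

lemma D_chain: "1 \<le> i \<Longrightarrow> i + 1 \<le> n \<Longrightarrow> chain (2^n) (one_q n i Zg) (D_seq n i d) (one_q n (i+1) Zg)"
  using chain_lift[OF okc_chain[OF okc_D[of d]], of i n]
  by (simp add: P4_hd_last D_seq_map Z_up Z_low)

lemma D_gates: "1 \<le> i \<Longrightarrow> i + 1 \<le> n \<Longrightarrow> g \<in> set (D_seq n i d) \<Longrightarrow> g \<in> carrier_mat (2^n) (2^n) \<and> g * g = 1\<^sub>m (2^n)"
  by (auto simp: D_seq_map D4_def two_q_mult sq Lcarr two_q_one two_q_carrier split: if_splits)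

lemma prefix_chain: "n \<ge> 1 \<Longrightarrow> m \<le> n - 1 \<Longrightarrow>
  chain (2^n) (one_q n 1 Zg) (concat (map (\<lambda>k. D_seq n (k+1) (ds ! k)) [0..<m])) (one_q n (m+1) Zg)"
proof (induction m)
  case 0 then show ?case by (auto intro!: chain.nil one_q_carrier Zg_carrier)
next
  case (Suc m)
  then have "chain (2^n) (one_q n (m+1) Zg) (D_seq n (m+1) (ds!m)) (one_q n (m+1+1) Zg)"
    by (intro D_chain) auto
  then show ?case using Suc by (auto intro: chain_append)
qed

lemma E_chain: "n \<ge> 1 \<Longrightarrow> chain (2^n) (one_q n n Zg) (E_seq n e) (one_q n n Zg)"
  by (auto simp: E_seq_def intro!: chain.nil chain.cons[where P'="one_q n n Zg"] one_q_carrier Zg_carrier)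

lemma E_gates: "n \<ge> 1 \<Longrightarrow> g \<in> set (E_seq n e) \<Longrightarrow> g \<in> carrier_mat (2^n) (2^n) \<and> g * g = 1\<^sub>m (2^n)"
  by (auto simp: E_seq_def one_q_mult Zg_carrier ZgZg one_q_one intro!: one_q_carrier split: if_splits)

lemma fold_inv: "\<forall>g\<in>set (gs :: real mat list). g \<in> carrier_mat N N \<and> g * g = 1\<^sub>m N \<Longrightarrow> A \<in> carrier_mat N N \<Longrightarrow> B \<in> carrier_mat N N
  \<Longrightarrow> A * B = 1\<^sub>m N \<Longrightarrow> B * A = 1\<^sub>m N \<Longrightarrow>
  \<exists>B'\<in>carrier_mat N N. foldl (\<lambda>acc g. g * acc) A gs * B' = 1\<^sub>m N \<and> B' * foldl (\<lambda>acc g. g * acc) A gs = 1\<^sub>m N"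
proof (induction gs arbitrary: A B)
  case Nil then show ?case by auto
next
  case (Cons g gs)
  have g: "g \<in> carrier_mat N N" "g * g = 1\<^sub>m N" using Cons by auto
  have e1: "A * (B * g) = g"
  proof -
    have "A * (B * g) = A * B * g" by (rule sym[OF assoc_mult_mat[OF Cons.prems(2) Cons.prems(3) g(1)]])
    also have "\<dots> = g" unfolding Cons.prems(4) by (rule left_mult_one_mat[OF g(1)])
    finally show ?thesis .
  qed
  have e2: "g * (g * A) = A"
  proof -
    have "g * (g * A) = g * g * A" by (rule sym[OF assoc_mult_mat[OF g(1) g(1) Cons.prems(2)]])
    also have "\<dots> = A" unfolding g(2) by (rule left_mult_one_mat[OF Cons.prems(2)])
    finally show ?thesis .
  qed
  have 1: "g * A * (B * g) = 1\<^sub>m N"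
    using assoc_mult_mat[OF g(1) Cons.prems(2) mult_carrier_mat[OF Cons.prems(3) g(1)]] e1 g(2) by simp
  have 2: "B * g * (g * A) = 1\<^sub>m N"
    using assoc_mult_mat[OF Cons.prems(3) g(1) mult_carrier_mat[OF g(1) Cons.prems(2)]] e2 Cons.prems(5) by simp
  show ?case using Cons.IH[of "g*A" "B*g"] Cons.prems g 1 2 by simp
qed


theorem proposition4p13:
  fixes n :: nat and ds :: "nat list" and e :: nat
  assumes "n \<ge> 1" and "is_xcirc_param n ds e"
  shows "conjm (circ_op n (xcirc_gates n ds e)) (kron Zg (1\<^sub>m (2^(n-1))))
           = kron (1\<^sub>m (2^(n-1))) Zg"
proof -
  let ?N = "(2::nat)^n"
  let ?gs = "xcirc_gates n ds e"
  let ?P = "one_q n 1 Zg" and ?Q = "one_q n n Zg"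
  have P: "?P = kron Zg (1\<^sub>m (2^(n-1)))" using kron_one_left[of "kron Zg (1\<^sub>m (2^(n-1)))"] by (simp add: one_q_def)
  have Q: "?Q = kron (1\<^sub>m (2^(n-1))) Zg" using kron_one_right[of Zg] by (simp add: one_q_def)
  have pc: "chain ?N ?P (concat (map (\<lambda>k. D_seq n (k+1) (ds ! k)) [0..<n-1])) ?Q"
    using prefix_chain[OF assms(1) le_refl, of ds] assms(1) by simp
  have ch: "chain ?N ?P ?gs ?Q"
    unfolding xcirc_gates_def
    using chain_append[OF pc E_chain[OF assms(1), of e]] .
  have Pc: "?P \<in> carrier_mat ?N ?N" using assms(1) by (intro one_q_carrier Zg_carrier) auto
  have one: "1\<^sub>m ?N * ?P = ?P * 1\<^sub>m ?N" using Pc by simp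
  have CP: "circ_op n ?gs * ?P = ?Q * circ_op n ?gs" and Cc: "circ_op n ?gs \<in> carrier_mat ?N ?N"
    using chain_fold[OF ch one_carrier_mat Pc one] unfolding circ_op_def by auto
  have gates: "\<forall>g\<in>set ?gs. g \<in> carrier_mat ?N ?N \<and> g * g = 1\<^sub>m ?N"
  proof
    fix g assume "g \<in> set ?gs"
    then consider k where "k < n - 1" "g \<in> set (D_seq n (k+1) (ds!k))" | "g \<in> set (E_seq n e)"
      unfolding xcirc_gates_def by auto
    then show "g \<in> carrier_mat ?N ?N \<and> g * g = 1\<^sub>m ?N"
    proof cases
      case 1 then show ?thesis by (intro D_gates[of "k+1" n g "ds!k"]) auto
    next
      case 2 then show ?thesis using E_gates assms(1) by blast
    qed
  qed
  obtain B where B: "B \<in> carrier_mat ?N ?N" "circ_op n ?gs * B = 1\<^sub>m ?N" "B * circ_op n ?gs = 1\<^sub>m ?N"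
    using fold_inv[OF gates one_carrier_mat one_carrier_mat] unfolding circ_op_def by auto
  have U: "circ_op n ?gs \<in> Units (ring_mat TYPE(real) ?N ())"
    using B Cc unfolding Units_def ring_mat_def by auto
  obtain B' where B': "mat_inverse (circ_op n ?gs) = Some B'"
    using mat_inverse(1)[OF Cc, where b="()"] U by (cases "mat_inverse (circ_op n ?gs)") auto
  have B'p: "circ_op n ?gs * B' = 1\<^sub>m ?N" "B' \<in> carrier_mat ?N ?N"
    using mat_inverse(2)[OF Cc B'] by auto
  have Qc: "?Q \<in> carrier_mat ?N ?N" using assms(1) by (intro one_q_carrier Zg_carrier) auto
  have "conjm (circ_op n ?gs) ?P = ?Q * circ_op n ?gs * B'"
    unfolding conjm_def B' using CP by simp
  also have "\<dots> = ?Q * (circ_op n ?gs * B')" using Qc Cc B'p by (simp add: assoc_mult_mat[of _ ?N ?N _ ?N _ ?N])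
  also have "\<dots> = ?Q" using B'p Qc by simp
  finally show ?thesis using P Q by simp
qed

end
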